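(* A graph $G$ is well-bicovered with $b(G)=|V(G)|-1$ if and only if there exists an odd cycle $C$ in $G$ such that every odd cycle of $G$ contains every vertex of $C$.
   Context: All graphs are finite and simple; "subgraph" means induced subgraph. $b(G)$ denotes the maximum order of an induced bipartite subgraph of $G$. $G$ is well-bicovered if every vertex-inclusion-maximal induced bipartite subgraph of $G$ has the same order. *)

theory Defs
  imports Main
begin

definition simple_graph :: "'a set \<Rightarrow> ('a \<Rightarrow> 'a \<Rightarrow> bool) \<Rightarrow> bool" where
  "simple_graph V E \<longleftrightarrow> finite V \<and> (\<forall>u v. E u v \<longrightarrow> E v u) \<and> (\<forall>v. \<not> E v v)
     \<and> (\<forall>u v. E u v \<longrightarrow> u \<in> V \<and> v \<in> V)"

definition induced_bipartite :: "('a \<Rightarrow> 'a \<Rightarrow> bool) \<Rightarrow> 'a set \<Rightarrow> bool" where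
  "induced_bipartite E S \<longleftrightarrow>
     (\<exists>c :: 'a \<Rightarrow> bool. \<forall>u\<in>S. \<forall>v\<in>S. E u v \<longrightarrow> c u \<noteq> c v)"

definition maximal_induced_bipartite ::
    "'a set \<Rightarrow> ('a \<Rightarrow> 'a \<Rightarrow> bool) \<Rightarrow> 'a set \<Rightarrow> bool" where
  "maximal_induced_bipartite V E S \<longleftrightarrow> S \<subseteq> V \<and> induced_bipartite E S \<and>
     (\<forall>T. S \<subset> T \<and> T \<subseteq> V \<longrightarrow> \<not> induced_bipartite E T)"

definition bip_number :: "'a set \<Rightarrow> ('a \<Rightarrow> 'a \<Rightarrow> bool) \<Rightarrow> nat" where
  "bip_number V E = Max {card S | S. S \<subseteq> V \<and> induced_bipartite E S}"

definition well_bicovered :: "'a set \<Rightarrow> ('a \<Rightarrow> 'a \<Rightarrow> bool) \<Rightarrow> bool" where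
  "well_bicovered V E \<longleftrightarrow>
     (\<forall>S T. maximal_induced_bipartite V E S \<and> maximal_induced_bipartite V E T
        \<longrightarrow> card S = card T)"

definition is_cycle :: "'a set \<Rightarrow> ('a \<Rightarrow> 'a \<Rightarrow> bool) \<Rightarrow> 'a list \<Rightarrow> bool" where
  "is_cycle V E cs \<longleftrightarrow> length cs \<ge> 3 \<and> distinct cs \<and> set cs \<subseteq> V \<and>
     (\<forall>i < length cs. E (cs ! i) (cs ! ((i + 1) mod length cs)))"

definition is_odd_cycle :: "'a set \<Rightarrow> ('a \<Rightarrow> 'a \<Rightarrow> bool) \<Rightarrow> 'a list \<Rightarrow> bool" where
  "is_odd_cycle V E cs \<longleftrightarrow> is_cycle V E cs \<and> odd (length cs)"

end

theory Submission
  imports Defs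
begin

definition wlk :: "'a set \<Rightarrow> ('a \<Rightarrow> 'a \<Rightarrow> bool) \<Rightarrow> (nat \<Rightarrow> 'a) \<Rightarrow> nat \<Rightarrow> bool" where
  "wlk S E f n \<longleftrightarrow> (\<forall>i\<le>n. f i \<in> S) \<and> (\<forall>i<n. E (f i) (f (Suc i)))"

definition wk :: "'a set \<Rightarrow> ('a \<Rightarrow> 'a \<Rightarrow> bool) \<Rightarrow> 'a \<Rightarrow> 'a \<Rightarrow> nat \<Rightarrow> bool" where
  "wk S E u v n \<longleftrightarrow> (\<exists>f. wlk S E f n \<and> f 0 = u \<and> f n = v)"

lemma wlk_color:
  assumes "wlk S E f n" "\<forall>u\<in>S. \<forall>v\<in>S. E u v \<longrightarrow> c u \<noteq> c v"
  shows "c (f n) = (if even n then c (f 0) else \<not> c (f 0))"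
  using assms
proof (induction n)
  case 0 then show ?case by simp
next
  case (Suc n)
  have w: "wlk S E f n" using Suc.prems(1) unfolding wlk_def by auto
  have "f n \<in> S" "f (Suc n) \<in> S" "E (f n) (f (Suc n))" using Suc.prems(1) unfolding wlk_def by auto
  hence "c (f (Suc n)) \<noteq> c (f n)" using Suc.prems(2) by blast
  then show ?case using Suc.IH[OF w Suc.prems(2)] by auto
qed

lemma bip_no_odd_walk:
  assumes "induced_bipartite E S" "wlk S E f n" "f 0 = f n" shows "even n"
proof -
  obtain c :: "'a \<Rightarrow> bool" where c: "\<forall>u\<in>S. \<forall>v\<in>S. E u v \<longrightarrow> c u \<noteq> c v"
    using assms(1) unfolding induced_bipartite_def by blast
  from wlk_color[OF assms(2) c] assms(3) show ?thesis by (auto split: if_splits)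
qed

lemma wk_rev:
  assumes "wk S E u v n" "\<forall>u v. E u v \<longrightarrow> E v u" shows "wk S E v u n"
proof -
  obtain f where f: "wlk S E f n" "f 0 = u" "f n = v" using assms(1) unfolding wk_def by blast
  have "E (f (n - i)) (f (n - Suc i))" if "i < n" for i
  proof -
    have "E (f (n - Suc i)) (f (Suc (n - Suc i)))" using f(1) that unfolding wlk_def by auto
    moreover have "Suc (n - Suc i) = n - i" using that by auto
    ultimately show ?thesis using assms(2) by metis
  qed
  hence "wlk S E (\<lambda>k. f (n - k)) n" using f(1) unfolding wlk_def by auto
  thus ?thesis using f unfolding wk_def by (intro exI[of _ "\<lambda>k. f (n - k)"]) auto
qed

lemma wlk_app:
  assumes "wlk S E f n" "wlk S E g m" "f n = g 0"
  shows "wlk S E (\<lambda>k. if k \<le> n then f k else g (k - n)) (n + m)"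
  unfolding wlk_def
proof safe
  fix i assume "i \<le> n+m" then show "(if i \<le> n then f i else g (i-n)) \<in> S"
    using assms unfolding wlk_def by auto
next
  fix i assume i: "i < n+m"
  show "E (if i \<le> n then f i else g (i-n)) (if Suc i \<le> n then f (Suc i) else g (Suc i - n))"
  proof (cases "i < n")
    case True then show ?thesis using assms(1) unfolding wlk_def by auto
  next
    case False
    then have "E (g (i-n)) (g (Suc (i-n)))" using assms(2) i unfolding wlk_def by auto
    moreover have "Suc (i - n) = Suc i - n" using False by auto
    ultimately show ?thesis using False assms(3) by (cases "i = n") auto
  qed
qed

lemma wk_trans:
  assumes "wk S E u v n" "wk S E v w m" shows "wk S E u w (n + m)"
proof -
  obtain f where f: "wlk S E f n" "f 0 = u" "f n = v" using assms(1) unfolding wk_def by blast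
  obtain g where g: "wlk S E g m" "g 0 = v" "g m = w" using assms(2) unfolding wk_def by blast
  show ?thesis using wlk_app[OF f(1) g(1)] f g unfolding wk_def
    by (intro exI[of _ "\<lambda>k. if k \<le> n then f k else g (k - n)"]) auto
qed

lemma wk_edge: "u \<in> S \<Longrightarrow> v \<in> S \<Longrightarrow> E u v \<Longrightarrow> wk S E u v 1"
  unfolding wk_def wlk_def by (intro exI[of _ "\<lambda>k. if k = 0 then u else v"]) (auto simp: le_Suc_eq)

lemma wk_refl: "u \<in> S \<Longrightarrow> wk S E u u 0"
  unfolding wk_def wlk_def by (intro exI[of _ "\<lambda>k. u"]) auto

lemma no_odd_walk_bip:
  assumes sym: "\<forall>u v. E u v \<longrightarrow> E v u"
  and H: "\<forall>u n. wk S E u u n \<longrightarrow> even n"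
  shows "induced_bipartite E S"
proof -
  define conn where "conn = (\<lambda>u v. \<exists>n. wk S E u v n)"
  have conn_sym: "conn v u" if "conn u v" for u v
    using that wk_rev[OF _ sym] unfolding conn_def by metis
  have conn_trans: "conn u w" if a: "conn u v" "conn v w" for u v w
  proof -
    obtain n m where "wk S E u v n" "wk S E v w m" using a unfolding conn_def by metis
    then show ?thesis using wk_trans unfolding conn_def by metis
  qed
  define r where "r = (\<lambda>u. SOME w. conn u w)"
  have cr: "conn u (r u)" if "u \<in> S" for u
  proof -
    have "conn u u" using wk_refl[OF that] unfolding conn_def by metis
    thus ?thesis unfolding r_def by (rule someI)
  qed
  define c where "c = (\<lambda>u. \<exists>n. wk S E u (r u) n \<and> even n)"
  show ?thesis unfolding induced_bipartite_def
  proof (intro exI[of _ c] ballI impI)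
    fix u v assume u: "u\<in>S" and v: "v\<in>S" and e: "E u v"
    have cuv: "conn u v" using wk_edge[of u S v E, OF u v e] unfolding conn_def by metis
    have "(\<lambda>w. conn u w) = (\<lambda>w. conn v w)"
      by (rule ext) (meson conn_sym conn_trans cuv)
    hence ruv: "r u = r v" unfolding r_def by simp
    show "c u \<noteq> c v"
    proof
      assume cu: "c u = c v"
      have "\<exists>n m. wk S E u (r u) n \<and> wk S E v (r u) m \<and> (even n = even m)"
      proof (cases "c u")
        case True
        then have "c v" using cu by simp
        then show ?thesis using True ruv unfolding c_def by auto
      next
        case False
        then have "\<not> c v" using cu by simp
        obtain n where n: "wk S E u (r u) n" using cr[OF u] unfolding conn_def by metis
        obtain m where m: "wk S E v (r v) m" using cr[OF v] unfolding conn_def by metis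
        have "odd n" using n False unfolding c_def by blast
        moreover have "odd m" using m \<open>\<not> c v\<close> unfolding c_def by blast
        ultimately show ?thesis using n m ruv by auto
      qed
      then obtain n m where nm: "wk S E u (r u) n" "wk S E v (r u) m" "even n = even m" by blast
      have "wk S E u (r u) (1 + m)" using wk_trans[OF wk_edge[of u S v E, OF u v e] nm(2)] .
      from wk_trans[OF this wk_rev[OF nm(1) sym]] have "wk S E u u (1 + m + n)" .
      hence "even (1 + m + n)" using H by blast
      thus False using nm(3) by auto
    qed
  qed
qed

lemma odd_walk_cycle:
  assumes irr: "\<forall>v. \<not>E v v" and SV: "S \<subseteq> V"
  shows "wlk S E f n \<Longrightarrow> f 0 = f n \<Longrightarrow> odd n \<Longrightarrow> \<exists>C. is_odd_cycle V E C \<and> set C \<subseteq> S"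
proof (induction n arbitrary: f rule: less_induct)
  case (less n f)
  show ?case
  proof (cases "inj_on f {0..<n}")
    case True
    define C where "C = map f [0..<n]"
    have n1: "n \<noteq> 1"
    proof
      assume "n = 1"
      then have "E (f 0) (f 1)" using less.prems(1) unfolding wlk_def by auto
      with less.prems(2) \<open>n = 1\<close> irr show False by simp
    qed
    have "n \<noteq> 0" "n \<noteq> 2" using less.prems(3) by (metis even_zero, metis even_numeral)
    hence n3: "n \<ge> 3" using n1 by linarith
    have setC: "set C \<subseteq> S" using less.prems(1) unfolding C_def wlk_def by auto
    have edges: "E (C ! i) (C ! ((i + 1) mod length C))" if "i < length C" for i
    proof -
      have i: "i < n" using that unfolding C_def by simp
      have ci: "C ! i = f i" using i unfolding C_def by simp
      have "(i + 1) mod n < n" using i by simp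
      hence cj: "C ! ((i + 1) mod length C) = f ((i + 1) mod n)" unfolding C_def by simp
      have e: "E (f i) (f (Suc i))" using less.prems(1) i unfolding wlk_def by auto
      show ?thesis
      proof (cases "i + 1 < n")
        case True then show ?thesis using ci cj e by simp
      next
        case False then have "i + 1 = n" using i by simp
        then show ?thesis using ci cj e less.prems(2) by simp
      qed
    qed
    have lC: "length C = n" unfolding C_def by simp
    have dC: "distinct C" unfolding C_def using True by (simp add: distinct_map)
    have "is_odd_cycle V E C"
      unfolding is_odd_cycle_def is_cycle_def
      using n3 dC setC SV edges less.prems(3) lC by blast
    then show ?thesis using setC by blast
  next
    case False
    then obtain x y where xy: "x < n" "y < n" "x \<noteq> y" "f x = f y"
      unfolding inj_on_def by auto
    obtain i j where ij: "i < j" "j < n" "f i = f j"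
    proof (cases "x < y")
      case True then show ?thesis using that xy by blast
    next
      case False then have "y < x" using xy(3) by linarith
      then show ?thesis using that xy by force
    qed
    define g where "g = (\<lambda>k. f (i + k))"
    define h where "h = (\<lambda>k. if k \<le> i then f k else f (k + (j - i)))"
    have wg: "wlk S E g (j - i)" using less.prems(1) ij unfolding wlk_def g_def by auto
    have wh: "wlk S E h (n - (j - i))"
      unfolding wlk_def
    proof safe
      fix k assume "k \<le> n - (j - i)" then show "h k \<in> S"
        using less.prems(1) ij unfolding wlk_def h_def by auto
    next
      fix k assume k: "k < n - (j - i)"
      show "E (h k) (h (Suc k))"
      proof (cases "k < i")
        case True then show ?thesis using less.prems(1) ij unfolding wlk_def h_def by auto
      next
        case False
        show ?thesis
        proof (cases "k = i")
          case True
          have "E (f j) (f (Suc j))" using less.prems(1) ij unfolding wlk_def by auto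
          moreover have "Suc i + (j - i) = Suc j" using ij by simp
          ultimately show ?thesis using True ij unfolding h_def by auto
        next
          case False
          have "E (f (k + (j - i))) (f (Suc (k + (j - i))))"
            using less.prems(1) ij k unfolding wlk_def by auto
          then show ?thesis using False \<open>\<not> k < i\<close> unfolding h_def by auto
        qed
      qed
    qed
    have g0: "g 0 = g (j - i)" using ij unfolding g_def by simp
    have h0: "h 0 = h (n - (j - i))" using ij less.prems(2) unfolding h_def by auto
    have "(j - i) + (n - (j - i)) = n" using ij by simp
    hence "odd (j - i) \<or> odd (n - (j - i))" using less.prems(3) by (metis even_add)
    moreover have "j - i < n" "n - (j - i) < n" using ij by auto
    ultimately show ?thesis using less.IH wg wh g0 h0 by blast
  qed
qed

lemma cycle_walk:
  assumes "is_odd_cycle V E C" "set C \<subseteq> S"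
  shows "wlk S E (\<lambda>k. C ! (k mod length C)) (length C) \<and> odd (length C)"
proof -
  have L: "length C \<ge> 3" "odd (length C)" using assms(1) unfolding is_odd_cycle_def is_cycle_def by auto
  have e: "\<forall>i < length C. E (C ! i) (C ! ((i + 1) mod length C))"
    using assms(1) unfolding is_odd_cycle_def is_cycle_def by auto
  have "C ! (i mod length C) \<in> S" for i
  proof -
    have "i mod length C < length C" using L(1) by (intro mod_less_divisor) linarith
    then show ?thesis using assms(2) nth_mem by blast
  qed
  moreover have "E (C ! (i mod length C)) (C ! (Suc i mod length C))" if "i < length C" for i
    using e that by simp
  ultimately show ?thesis using L unfolding wlk_def by auto
qed

lemma bip_iff:
  assumes "simple_graph V E" "S \<subseteq> V"
  shows "induced_bipartite E S \<longleftrightarrow> \<not> (\<exists>C. is_odd_cycle V E C \<and> set C \<subseteq> S)"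
proof
  assume b: "induced_bipartite E S"
  show "\<not> (\<exists>C. is_odd_cycle V E C \<and> set C \<subseteq> S)"
  proof
    assume "\<exists>C. is_odd_cycle V E C \<and> set C \<subseteq> S"
    then obtain C where C: "is_odd_cycle V E C" "set C \<subseteq> S" by blast
    have "length C \<ge> 3" using C(1) unfolding is_odd_cycle_def is_cycle_def by auto
    then have "C ! (0 mod length C) = C ! (length C mod length C)" by simp
    from bip_no_odd_walk[OF b conjunct1[OF cycle_walk[OF C]] this] conjunct2[OF cycle_walk[OF C]]
    show False by simp
  qed
next
  assume n: "\<not> (\<exists>C. is_odd_cycle V E C \<and> set C \<subseteq> S)"
  have sym: "\<forall>u v. E u v \<longrightarrow> E v u" and irr: "\<forall>v. \<not> E v v"
    using assms(1) unfolding simple_graph_def by auto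
  have "\<forall>u n. wk S E u u n \<longrightarrow> even n"
  proof (intro allI impI)
    fix u n assume "wk S E u u n"
    then obtain f where "wlk S E f n" "f 0 = f n" unfolding wk_def by auto
    then show "even n" using odd_walk_cycle[of E S V, OF irr assms(2)] n by blast
  qed
  then show "induced_bipartite E S" using no_odd_walk_bip[OF sym] by blast
qed

lemma bip_sub: assumes "induced_bipartite E T" "S \<subseteq> T" shows "induced_bipartite E S"
proof -
  obtain c :: "'a \<Rightarrow> bool" where c: "\<forall>u\<in>T. \<forall>v\<in>T. E u v \<longrightarrow> c u \<noteq> c v"
    using assms(1) unfolding induced_bipartite_def by blast
  then have "\<forall>u\<in>S. \<forall>v\<in>S. E u v \<longrightarrow> c u \<noteq> c v" using assms(2) by blast
  then show ?thesis unfolding induced_bipartite_def by blast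
qed

theorem mainTheorem9:
  fixes V :: "'a set" and E :: "'a \<Rightarrow> 'a \<Rightarrow> bool"
  assumes "simple_graph V E"
  shows "(well_bicovered V E \<and> int (bip_number V E) = int (card V) - 1) \<longleftrightarrow>
         (\<exists>C. is_odd_cycle V E C \<and>
              (\<forall>D. is_odd_cycle V E D \<longrightarrow> set C \<subseteq> set D))"
proof -
  have fin: "finite V" using assms unfolding simple_graph_def by (rule conjunct1)
  let ?A = "{S. S \<subseteq> V \<and> induced_bipartite E S}"
  have Beq: "{card S | S. S \<subseteq> V \<and> induced_bipartite E S} = card ` ?A" by blast
  have finA: "finite ?A" by (rule finite_subset[of _ "Pow V"]) (auto simp: fin)
  have finB: "finite {card S | S. S \<subseteq> V \<and> induced_bipartite E S}" unfolding Beq using finA by simp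
  have e0: "induced_bipartite E {}" unfolding induced_bipartite_def by simp
  have Bmax: "card S \<le> bip_number V E" if "S \<subseteq> V" "induced_bipartite E S" for S
    unfolding bip_number_def using finB that by (intro Max_ge) auto
  have Bex: "\<exists>S. S \<subseteq> V \<and> induced_bipartite E S \<and> card S = bip_number V E"
  proof -
    have "card {} \<in> {card S | S. S \<subseteq> V \<and> induced_bipartite E S}"
      by (rule CollectI, rule exI[of _ "{}"]) (simp add: e0)
    then have "{card S | S. S \<subseteq> V \<and> induced_bipartite E S} \<noteq> {}" by auto
    from Max_in[OF finB this] obtain S where
      "bip_number V E = card S" "S \<subseteq> V" "induced_bipartite E S"
      unfolding bip_number_def by auto
    then show ?thesis by auto
  qed
  have extm: "\<exists>T. S \<subseteq> T \<and> maximal_induced_bipartite V E T"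
    if "S \<subseteq> V" "induced_bipartite E S" for S
  proof -
    let ?X = "{T. S \<subseteq> T \<and> T \<subseteq> V \<and> induced_bipartite E T}"
    have "finite ?X" by (rule finite_subset[of _ "Pow V"]) (auto simp: fin)
    moreover have "S \<in> ?X" using that by simp
    ultimately have "\<exists>m\<in>?X. \<forall>b\<in>?X. m \<le> b \<longrightarrow> m = b"
      using finite_has_maximal[of ?X] by auto
    then obtain m where m: "m \<in> ?X" "\<forall>b\<in>?X. m \<le> b \<longrightarrow> m = b" by (elim bexE) 
    have m1: "m \<subseteq> V" "induced_bipartite E m" "S \<subseteq> m" using m(1) by auto
    have "\<not> induced_bipartite E T" if a: "m \<subset> T" "T \<subseteq> V" for T
    proof
      assume "induced_bipartite E T"
      then have "T \<in> ?X" using a m1 by auto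
      then have "m = T" using m(2) a by auto
      then show False using a by simp
    qed
    then have "maximal_induced_bipartite V E m"
      unfolding maximal_induced_bipartite_def using m1 by auto
    then show ?thesis using m1 by auto
  qed
  show ?thesis
  proof
    assume L: "well_bicovered V E \<and> int (bip_number V E) = int (card V) - 1"
    have cardV: "card V \<ge> 1" and bn: "bip_number V E = card V - 1" using L by linarith+
    have nV: "\<not> induced_bipartite E V"
      using Bmax[of V] bn cardV by auto
    let ?N = "{M. M \<subseteq> V \<and> \<not> induced_bipartite E M}"
    have "finite ?N" by (rule finite_subset[of _ "Pow V"]) (auto simp: fin)
    moreover have "V \<in> ?N" using nV by simp
    ultimately have "\<exists>M\<in>?N. \<forall>b\<in>?N. b \<le> M \<longrightarrow> M = b"
      using finite_has_minimal[of ?N] by auto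
    then obtain M where Mm: "M \<in> ?N" "\<forall>b\<in>?N. b \<le> M \<longrightarrow> M = b" by (elim bexE)
    have M: "M \<subseteq> V" "\<not> induced_bipartite E M" using Mm(1) by auto
    have M3: "induced_bipartite E M'" if a: "M' \<subset> M" for M'
    proof (rule ccontr)
      assume "\<not> induced_bipartite E M'"
      then have "M' \<in> ?N" using a M(1) by auto
      then have "M = M'" using Mm(2) a by auto
      then show False using a by simp
    qed
    have allmax: "card T = card V - 1" if "maximal_induced_bipartite V E T" for T
    proof -
      obtain B0 where B0: "B0 \<subseteq> V" "induced_bipartite E B0" "card B0 = bip_number V E"
        using Bex by blast
      have "maximal_induced_bipartite V E B0"
        unfolding maximal_induced_bipartite_def
      proof (intro conjI allI impI B0(1,2))
        fix T' assume T': "B0 \<subset> T' \<and> T' \<subseteq> V"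
        show "\<not> induced_bipartite E T'"
        proof
          assume "induced_bipartite E T'"
          then have "card T' \<le> bip_number V E" using Bmax T' by blast
          moreover have "card B0 < card T'" using T' fin by (meson psubset_card_mono rev_finite_subset)
          ultimately show False using B0(3) by simp
        qed
      qed
      then have "card T = card B0" using L that unfolding well_bicovered_def by blast
      then show ?thesis using B0(3) bn by simp
    qed
    have key: "induced_bipartite E (V - {v})" if v: "v \<in> M" for v
    proof -
      have "M - {v} \<subset> M" using v by blast
      then have b1: "induced_bipartite E (M - {v})" by (rule M3)
      have "M - {v} \<subseteq> V" using M(1) by blast
      then obtain T where T: "M - {v} \<subseteq> T" "maximal_induced_bipartite V E T"
        using extm[OF _ b1] by blast
      have TV: "T \<subseteq> V" "induced_bipartite E T" using T(2) unfolding maximal_induced_bipartite_def by auto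
      have cT: "card T = card V - 1" using allmax T(2) .
      have "card (V - T) = 1" using card_Diff_subset[OF rev_finite_subset[OF fin TV(1)] TV(1)] cT cardV by simp
      then obtain w where w: "V - T = {w}" using card_1_singletonE by blast
      have TVw: "T = V - {w}" using w TV(1) by blast
      have "w \<in> M"
      proof (rule ccontr)
        assume "w \<notin> M"
        then have "M \<subseteq> T" using TVw M(1) by blast
        then show False using bip_sub[OF TV(2)] M(2) by blast
      qed
      moreover have "w \<notin> M - {v}" using T(1) w by blast
      ultimately have "w = v" by blast
      then show ?thesis using TVw TV(2) by simp
    qed
    obtain C where C: "is_odd_cycle V E C" "set C \<subseteq> M"
      using bip_iff[OF assms M(1)] M(2) by blast
    have "\<forall>D. is_odd_cycle V E D \<longrightarrow> set C \<subseteq> set D"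
    proof (intro allI impI subsetI)
      fix D x assume D: "is_odd_cycle V E D" and x: "x \<in> set C"
      show "x \<in> set D"
      proof (rule ccontr)
        assume "x \<notin> set D"
        moreover have "set D \<subseteq> V" using D unfolding is_odd_cycle_def is_cycle_def by blast
        ultimately have "set D \<subseteq> V - {x}" by blast
        moreover have "induced_bipartite E (V - {x})" using key C(2) x by blast
        ultimately show False using bip_iff[OF assms, of "V - {x}"] D by blast
      qed
    qed
    then show "\<exists>C. is_odd_cycle V E C \<and> (\<forall>D. is_odd_cycle V E D \<longrightarrow> set C \<subseteq> set D)"
      using C(1) by blast
  next
    assume "\<exists>C. is_odd_cycle V E C \<and> (\<forall>D. is_odd_cycle V E D \<longrightarrow> set C \<subseteq> set D)"
    then obtain C where C: "is_odd_cycle V E C" "\<forall>D. is_odd_cycle V E D \<longrightarrow> set C \<subseteq> set D"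
      by blast
    have CV: "set C \<subseteq> V" and lC: "length C \<ge> 3"
      using C(1) unfolding is_odd_cycle_def is_cycle_def by auto
    have nV: "\<not> induced_bipartite E V" using bip_iff[OF assms, of V] C(1) CV by blast
    have xb: "induced_bipartite E (V - {x})" if x: "x \<in> set C" for x
    proof -
      have "\<not> (\<exists>D. is_odd_cycle V E D \<and> set D \<subseteq> V - {x})"
        using C(2) x by blast
      then show ?thesis using bip_iff[OF assms, of "V - {x}"] by blast
    qed
    obtain x0 where x0: "x0 \<in> set C" using lC by (cases C) auto
    have x0V: "x0 \<in> V" using x0 CV by blast
    have cardV: "card V \<ge> 1" using x0V fin by (metis One_nat_def Suc_leI card_gt_0_iff empty_iff)
    have leq: "card S \<le> card V - 1" if "S \<subseteq> V" "induced_bipartite E S" for S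
    proof -
      have "S \<noteq> V" using that nV by blast
      then have "S \<subset> V" using that by blast
      then have "card S < card V" using fin by (rule psubset_card_mono[rotated])
      then show ?thesis by simp
    qed
    have bn: "bip_number V E = card V - 1"
    proof (rule antisym)
      obtain B0 where B0: "B0 \<subseteq> V" "induced_bipartite E B0" "card B0 = bip_number V E"
        using Bex by blast
      show "bip_number V E \<le> card V - 1" using leq[OF B0(1,2)] B0(3) by simp
      have "card (V - {x0}) = card V - 1" using x0V fin by simp
      then show "card V - 1 \<le> bip_number V E" using Bmax[of "V - {x0}"] xb[OF x0] by auto
    qed
    have wb: "well_bicovered V E"
      unfolding well_bicovered_def
    proof (intro allI impI)
      have cm: "card S = card V - 1" if S: "maximal_induced_bipartite V E S" for S
      proof -
        have SV: "S \<subseteq> V" "induced_bipartite E S" using S unfolding maximal_induced_bipartite_def by auto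
        have "\<not> set C \<subseteq> S" using bip_iff[OF assms SV(1)] SV(2) C(1) by blast
        then obtain x where x: "x \<in> set C" "x \<notin> S" by blast
        have "S \<subseteq> V - {x}" using SV(1) x(2) by blast
        moreover have "\<not> S \<subset> V - {x}"
          using S xb[OF x(1)] unfolding maximal_induced_bipartite_def by blast
        ultimately have "S = V - {x}" by blast
        then show ?thesis using x(1) CV fin by auto
      qed
      fix S T assume "maximal_induced_bipartite V E S \<and> maximal_induced_bipartite V E T"
      then show "card S = card T" using cm by auto
    qed
    show "well_bicovered V E \<and> int (bip_number V E) = int (card V) - 1"
      using wb bn cardV by simp
  qed
qed

end
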